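(* Let $G=(V_1\cup V_2,E)$ be a finite simple graph with $V_1\cap V_2=\emptyset$ such that the induced subgraphs $G[V_1]$ and $G[V_2]$ both have edge-connectivity at least $n$. Assume that every vertex of $V_1$ has at least $m$ neighbors in $V_2$, where $m\ge n+2$. Let $v_1\in V_1$ and $v_2\in V_2$ be adjacent vertices such that there are $m$ paths in $G$ from $v_1$ to $v_2$ that are pairwise internally vertex-disjoint and which only use edges having one endpoint in $V_1$ and the other in $V_2$. Then there are $m+n$ pairwise edge-disjoint paths in $G$ connecting $v_1$ and $v_2$.
   Context: A graph is $\ell$-edge-connected if it has more than one vertex and removing any set of fewer than $\ell$ edges leaves it connected; its edge-connectivity is the largest such $\ell$. The single edge $\{v_1,v_2\}$ counts as a path. *)

theory Defs
  imports Main
begin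

definition simple_graph :: "'a set \<Rightarrow> 'a set set \<Rightarrow> bool" where
  "simple_graph V E \<longleftrightarrow> finite V \<and> (\<forall>e\<in>E. e \<subseteq> V \<and> card e = 2)"

definition induced_edges :: "'a set set \<Rightarrow> 'a set \<Rightarrow> 'a set set" where
  "induced_edges E S = {e \<in> E. e \<subseteq> S}"

definition connected_graph :: "'a set \<Rightarrow> 'a set set \<Rightarrow> bool" where
  "connected_graph S F \<longleftrightarrow>
     (\<forall>u\<in>S. \<forall>v\<in>S. (\<lambda>x y. {x, y} \<in> F)\<^sup>*\<^sup>* u v)"

definition edge_connected :: "'a set \<Rightarrow> 'a set set \<Rightarrow> nat \<Rightarrow> bool" where
  "edge_connected S F l \<longleftrightarrow>
     card S > 1 \<and> (\<forall>X. X \<subseteq> F \<and> card X < l \<longrightarrow> connected_graph S (F - X))"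

text \<open>Edge-connectivity (largest l with l-edge-connected; 0 by convention if none) is at least n.\<close>
definition edge_connectivity_ge :: "'a set \<Rightarrow> 'a set set \<Rightarrow> nat \<Rightarrow> bool" where
  "edge_connectivity_ge S F n \<longleftrightarrow> n = 0 \<or> edge_connected S F n"

definition is_path :: "'a set set \<Rightarrow> 'a list \<Rightarrow> bool" where
  "is_path E p \<longleftrightarrow> length p \<ge> 2 \<and> distinct p \<and>
     (\<forall>i. Suc i < length p \<longrightarrow> {p ! i, p ! Suc i} \<in> E)"

definition path_edges :: "'a list \<Rightarrow> 'a set set" where
  "path_edges p = {{p ! i, p ! Suc i} | i. Suc i < length p}"

definition interior :: "'a list \<Rightarrow> 'a set" where
  "interior p = set (butlast (tl p))"

definition path_between :: "'a set set \<Rightarrow> 'a \<Rightarrow> 'a \<Rightarrow> 'a list \<Rightarrow> bool" where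
  "path_between E u v p \<longleftrightarrow> is_path E p \<and> hd p = u \<and> last p = v"

end

theory Submission
  imports Defs
begin



definition chainr :: "('b \<Rightarrow> 'b \<Rightarrow> bool) \<Rightarrow> 'b list \<Rightarrow> bool" where
  "chainr r p \<longleftrightarrow> (\<forall>i. Suc i < length p \<longrightarrow> r (p!i) (p!Suc i))"

lemma chainr_single[simp]: "chainr r [x]"
  by (simp add: chainr_def)

lemma chainr_Cons2: "chainr r (x # y # p) \<longleftrightarrow> r x y \<and> chainr r (y#p)"
  unfolding chainr_def
proof safe
  fix i assume "\<forall>i. Suc i < length (x # y # p) \<longrightarrow> r ((x # y # p) ! i) ((x # y # p) ! Suc i)"
  then show "r x y" by force
next
  fix i assume h: "\<forall>i. Suc i < length (x # y # p) \<longrightarrow> r ((x # y # p) ! i) ((x # y # p) ! Suc i)"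
    and "Suc i < length (y # p)"
  then show "r ((y # p) ! i) ((y # p) ! Suc i)" using h[rule_format, of "Suc i"] by simp
next
  fix i assume "r x y" and h: "\<forall>i. Suc i < length (y # p) \<longrightarrow> r ((y # p) ! i) ((y # p) ! Suc i)"
    and "Suc i < length (x # y # p)"
  then show "r ((x # y # p) ! i) ((x # y # p) ! Suc i)"
    by (cases i) auto
qed

lemma chainr_append_suffix: "chainr r (u @ w) \<Longrightarrow> chainr r w"
  unfolding chainr_def
proof safe
  fix i assume h: "\<forall>i. Suc i < length (u @ w) \<longrightarrow> r ((u @ w) ! i) ((u @ w) ! Suc i)"
    and "Suc i < length w"
  then have "r ((u @ w) ! (length u + i)) ((u @ w) ! Suc (length u + i))"
    by (intro h[rule_format]) simp
  moreover have "(u @ w) ! (length u + i) = w ! i" "(u @ w) ! Suc (length u + i) = w ! Suc i"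
    by (simp_all add: nth_append)
  ultimately show "r (w ! i) (w ! Suc i)" by simp
qed

lemma rtranclp_distinct_chain:
  "r\<^sup>*\<^sup>* a b \<Longrightarrow> \<exists>p. p \<noteq> [] \<and> hd p = a \<and> last p = b \<and> distinct p \<and> chainr r p"
proof (induction rule: converse_rtranclp_induct)
  case base
  then show ?case by (intro exI[of _ "[b]"]) simp
next
  case (step a c)
  then obtain p where p: "p \<noteq> []" "hd p = c" "last p = b" "distinct p" "chainr r p" by blast
  show ?case
  proof (cases "a \<in> set p")
    case True
    then obtain u w where uw: "p = u @ a # w" by (meson split_list)
    show ?thesis
      apply (intro exI[of _ "a # w"])
      using p uw chainr_append_suffix[of r u "a#w"] by auto
  next
    case False
    then obtain p' where "p = c # p'" using p by (cases p) auto
    then show ?thesis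
      apply (intro exI[of _ "a # p"])
      using p False step.hyps(1) chainr_Cons2[of r a c p'] \<open>p = c # p'\<close> by auto
  qed
qed

lemma path_edges_single[simp]: "path_edges [x] = {}"
  by (simp add: path_edges_def)

lemma path_edges_Cons2: "path_edges (x # y # p) = insert {x,y} (path_edges (y#p))"
proof (rule set_eqI)
  fix e
  show "e \<in> path_edges (x # y # p) \<longleftrightarrow> e \<in> insert {x,y} (path_edges (y#p))"
  proof
    assume "e \<in> path_edges (x # y # p)"
    then obtain i where i: "e = {(x # y # p) ! i, (x # y # p) ! Suc i}" "Suc i < length (x # y # p)"
      unfolding path_edges_def by blast
    show "e \<in> insert {x,y} (path_edges (y#p))"
    proof (cases i)
      case 0 then show ?thesis using i by simp
    next
      case (Suc j)
      then have "e = {(y # p) ! j, (y # p) ! Suc j}" "Suc j < length (y # p)" using i by auto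
      then show ?thesis unfolding path_edges_def by blast
    qed
  next
    assume "e \<in> insert {x,y} (path_edges (y#p))"
    then consider "e = {x,y}" | j where "e = {(y # p) ! j, (y # p) ! Suc j}" "Suc j < length (y # p)"
      unfolding path_edges_def by blast
    then show "e \<in> path_edges (x # y # p)"
    proof cases
      case 1
      have "e = {(x # y # p) ! 0, (x # y # p) ! Suc 0}" "Suc 0 < length (x # y # p)" using 1 by auto
      then show ?thesis unfolding path_edges_def by blast
    next
      case 2
      have "e = {(x # y # p) ! Suc j, (x # y # p) ! Suc (Suc j)}" "Suc (Suc j) < length (x # y # p)" using 2 by auto
      then show ?thesis unfolding path_edges_def by blast
    qed
  qed
qed

lemma path_edges_subset_set: "e \<in> path_edges p \<Longrightarrow> e \<subseteq> set p"
  unfolding path_edges_def by auto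

definition exc :: "'b set \<Rightarrow> ('b \<Rightarrow> 'b \<Rightarrow> int) \<Rightarrow> 'b \<Rightarrow> int" where
  "exc S f u = (\<Sum>y\<in>S. f u y)"

definition upd :: "('b \<Rightarrow> 'b \<Rightarrow> int) \<Rightarrow> 'b \<Rightarrow> 'b \<Rightarrow> 'b \<Rightarrow> 'b \<Rightarrow> int" where
  "upd f x y = (\<lambda>u w. if u = x \<and> w = y then f u w + 1 else if u = y \<and> w = x then f u w - 1 else f u w)"

lemma sum_change_one:
  fixes g h :: "'b \<Rightarrow> int"
  assumes "finite S" "z \<in> S" "\<forall>w. w \<noteq> z \<longrightarrow> g w = h w"
  shows "(\<Sum>w\<in>S. g w) = (\<Sum>w\<in>S. h w) + (g z - h z)"
proof -
  have "(\<Sum>w\<in>S. g w) = g z + (\<Sum>w\<in>S-{z}. g w)" using assms sum.remove by metis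
  also have "(\<Sum>w\<in>S-{z}. g w) = (\<Sum>w\<in>S-{z}. h w)" using assms by (intro sum.cong) auto
  also have "(\<Sum>w\<in>S. h w) = h z + (\<Sum>w\<in>S-{z}. h w)" using assms sum.remove by metis
  ultimately show ?thesis by simp
qed

lemma exc_upd:
  assumes "finite S" "x \<in> S" "y \<in> S" "x \<noteq> y"
  shows "exc S (upd f x y) u = exc S f u + (if u = x then 1 else 0) - (if u = y then 1 else 0)"
proof -
  consider "u = x" | "u = y" | "u \<noteq> x" "u \<noteq> y" by blast
  then show ?thesis
  proof cases
    case 1
    have "exc S (upd f x y) u = exc S f u + (upd f x y u y - f u y)"
      unfolding exc_def using assms 1
      by (intro sum_change_one) (auto simp: upd_def)
    then show ?thesis using 1 assms by (simp add: upd_def)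
  next
    case 2
    have "exc S (upd f x y) u = exc S f u + (upd f x y u x - f u x)"
      unfolding exc_def using assms 2
      by (intro sum_change_one) (auto simp: upd_def)
    then show ?thesis using 2 assms by (simp add: upd_def)
  next
    case 3
    have "exc S (upd f x y) u = exc S f u" unfolding exc_def upd_def using 3 by simp
    then show ?thesis using 3 by simp
  qed
qed




lemma augment:
  assumes fin: "finite S" and FS: "\<forall>e\<in>F. e \<subseteq> S"
  shows "distinct p \<Longrightarrow> p \<noteq> [] \<Longrightarrow> chainr (\<lambda>x y. {x,y} \<in> F \<and> f x y < 1) p
   \<Longrightarrow> (\<forall>x y. f x y = - f y x) \<Longrightarrow> (\<forall>x y. f x y \<in> {-1,0,1}) \<Longrightarrow> (\<forall>x y. f x y \<noteq> 0 \<longrightarrow> {x,y} \<in> F)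
   \<Longrightarrow> \<exists>f'. (\<forall>x y. f' x y = - f' y x) \<and> (\<forall>x y. f' x y \<in> {-1,0,1}) \<and> (\<forall>x y. f' x y \<noteq> 0 \<longrightarrow> {x,y} \<in> F)
      \<and> (\<forall>u. exc S f' u = exc S f u + (if u = hd p then 1 else 0) - (if u = last p then 1 else 0))
      \<and> (\<forall>x y. {x,y} \<notin> path_edges p \<longrightarrow> f' x y = f x y)
      \<and> (\<forall>i. Suc i < length p \<longrightarrow> f' (p!i) (p!Suc i) = f (p!i) (p!Suc i) + 1)"
proof (induction p arbitrary: f)
  case Nil
  then show ?case by blast
next
  case (Cons x p')
  show ?case
  proof (cases p')
    case Nil
    have A: "\<forall>x y. f x y = - f y x" "\<forall>x y. f x y \<in> {-1,0,1}" "\<forall>x y. f x y \<noteq> 0 \<longrightarrow> {x,y} \<in> F"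
      using Cons.prems by blast+
    show ?thesis
    proof (intro exI[of _ f] conjI allI impI)
      fix u show "exc S f u = exc S f u + (if u = hd (x # p') then 1 else 0) - (if u = last (x # p') then 1 else 0)"
        using Nil by simp
    next
      fix i assume "Suc i < length (x # p')" then show "f ((x # p') ! i) ((x # p') ! Suc i) = f ((x # p') ! i) ((x # p') ! Suc i) + 1"
        using Nil by simp
    qed (use A in blast)+
  next
    case (Cons y p'')
    note p' = this
    have ch: "{x,y} \<in> F" "f x y < 1" "chainr (\<lambda>x y. {x,y} \<in> F \<and> f x y < 1) p'"
      using Cons.prems(3) unfolding p' chainr_Cons2 by blast+
    have xy: "x \<noteq> y" "x \<notin> set p'" using Cons.prems(1) p' by auto
    have xS: "x \<in> S" "y \<in> S" using ch(1) FS by auto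
    define f1 where "f1 = upd f x y"
    have A: "\<And>u w. f u w = - f w u" using Cons.prems(4) by blast
    have f1a: "\<forall>u w. f1 u w = - f1 w u"
    proof (intro allI)
      fix u w show "f1 u w = - f1 w u"
        using xy unfolding f1_def upd_def
        apply (cases "u = x \<and> w = y"; cases "u = y \<and> w = x")
           apply (auto simp: A[of w u])
        using A by metis+
    qed
    have fxy: "f x y \<in> {-1,0}" using Cons.prems(5) ch(2) by fastforce
    have f1b: "\<forall>u w. f1 u w \<in> {-1,0,1}"
    proof (intro allI)
      fix u w show "f1 u w \<in> {-1,0,1}"
        using Cons.prems(5) fxy xy A[of y x] unfolding f1_def upd_def
        by (cases "u = x \<and> w = y"; cases "u = y \<and> w = x") auto
    qed
    have f1c: "\<forall>u w. f1 u w \<noteq> 0 \<longrightarrow> {u,w} \<in> F"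
      using Cons.prems(6) ch(1) unfolding f1_def upd_def by (auto simp: insert_commute)
    have f1same: "f1 u w = f u w" if "u \<noteq> x" "w \<noteq> x" for u w
      using that unfolding f1_def upd_def by auto
    have ch1: "chainr (\<lambda>x y. {x,y} \<in> F \<and> f1 x y < 1) p'"
      unfolding chainr_def
    proof (intro allI impI)
      fix i assume i: "Suc i < length p'"
      have "p'!i \<noteq> x" "p'!Suc i \<noteq> x" using xy(2) i nth_mem[of i p'] nth_mem[of "Suc i" p'] by auto
      then show "{p' ! i, p' ! Suc i} \<in> F \<and> f1 (p' ! i) (p' ! Suc i) < 1"
        using ch(3) i f1same unfolding chainr_def by auto
    qed
    have dp: "distinct p'" "p' \<noteq> []" using Cons.prems(1) p' by auto
    obtain f' where f': "\<forall>x y. f' x y = - f' y x" "\<forall>x y. f' x y \<in> {-1,0,1}" "\<forall>x y. f' x y \<noteq> 0 \<longrightarrow> {x,y} \<in> F"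
      "\<forall>u. exc S f' u = exc S f1 u + (if u = hd p' then 1 else 0) - (if u = last p' then 1 else 0)"
      "\<forall>u w. {u,w} \<notin> path_edges p' \<longrightarrow> f' u w = f1 u w"
      "\<forall>i. Suc i < length p' \<longrightarrow> f' (p'!i) (p'!Suc i) = f1 (p'!i) (p'!Suc i) + 1"
      using Cons.IH[OF dp ch1 f1a f1b f1c] by blast
    show ?thesis
    proof (intro exI[of _ f'] conjI allI impI)
      show "\<And>x y. f' x y = - f' y x" "\<And>x y. f' x y \<in> {-1,0,1}" "\<And>x y. f' x y \<noteq> 0 \<Longrightarrow> {x,y} \<in> F"
        using f'(1,2,3) by blast+
    next
      fix u
      show "exc S f' u = exc S f u + (if u = hd (x # p') then 1 else 0) - (if u = last (x # p') then 1 else 0)"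
        using f'(4) exc_upd[OF fin xS xy(1), of f u] p' unfolding f1_def by auto
    next
      fix u w assume "{u, w} \<notin> path_edges (x # p')"
      then have "{u,w} \<notin> path_edges p'" "{u,w} \<noteq> {x,y}" using p' path_edges_Cons2[of x y p''] by auto
      then show "f' u w = f u w" using f'(5) unfolding f1_def upd_def by auto
    next
      fix i assume i: "Suc i < length (x # p')"
      show "f' ((x # p') ! i) ((x # p') ! Suc i) = f ((x # p') ! i) ((x # p') ! Suc i) + 1"
      proof (cases i)
        case 0
        have "{x,y} \<notin> path_edges p'" using xy(2) path_edges_subset_set by fastforce
        then have "f' x y = f1 x y" using f'(5) by auto
        then show ?thesis using 0 p' unfolding f1_def upd_def by simp
      next
        case (Suc j)
        have "p' ! j \<noteq> x" "p' ! Suc j \<noteq> x" using xy(2) i Suc by (auto dest: nth_mem)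
        then show ?thesis using f'(6) Suc i f1same by auto
      qed
    qed
  qed
qed




definition flowinv :: "'b set \<Rightarrow> 'b set set \<Rightarrow> 'b set \<Rightarrow> 'b \<Rightarrow> ('b \<Rightarrow> 'b \<Rightarrow> int) \<Rightarrow> bool" where
  "flowinv S F A t f \<longleftrightarrow> (\<forall>x y. f x y = - f y x) \<and> (\<forall>x y. f x y \<in> {-1,0,1}) \<and> (\<forall>x y. f x y \<noteq> 0 \<longrightarrow> {x,y} \<in> F)
     \<and> (\<forall>x\<in>S. x \<notin> A \<longrightarrow> x \<noteq> t \<longrightarrow> exc S f x = 0) \<and> (\<forall>a\<in>A. exc S f a = 0 \<or> exc S f a = 1)"

definition supp :: "('b \<Rightarrow> 'b \<Rightarrow> int) \<Rightarrow> 'b set set" where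
  "supp f = {e. \<exists>x y. e = {x,y} \<and> f x y \<noteq> 0}"

lemma antisym_zero:
  assumes "\<forall>x y. f x y = - f y x"
  shows "(\<Sum>x\<in>R. \<Sum>y\<in>R. f x y) = (0::int)"
proof -
  have "(\<Sum>x\<in>R. \<Sum>y\<in>R. f x y) = (\<Sum>y\<in>R. \<Sum>x\<in>R. f x y)" by (rule sum.swap)
  also have "\<dots> = (\<Sum>y\<in>R. \<Sum>x\<in>R. - f y x)"
    by (intro sum.cong refl) (use assms in blast)
  also have "\<dots> = - (\<Sum>y\<in>R. \<Sum>x\<in>R. f y x)" by (simp add: sum_negf)
  finally show ?thesis by simp
qed

lemma cut_sum:
  assumes "finite S" "R \<subseteq> S" "\<forall>x y. f x y = - f y x"
  shows "(\<Sum>x\<in>R. exc S f x) = (\<Sum>x\<in>R. \<Sum>y\<in>S-R. f x y)"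
proof -
  have "(\<Sum>x\<in>R. exc S f x) = (\<Sum>x\<in>R. (\<Sum>y\<in>S-R. f x y) + (\<Sum>y\<in>R. f x y))"
    unfolding exc_def using assms(1,2) by (intro sum.cong refl sum.subset_diff)
  also have "\<dots> = (\<Sum>x\<in>R. \<Sum>y\<in>S-R. f x y) + (\<Sum>x\<in>R. \<Sum>y\<in>R. f x y)"
    by (simp add: sum.distrib)
  finally show ?thesis using antisym_zero[OF assms(3)] by simp
qed

lemma closure_in:
  assumes "r\<^sup>*\<^sup>* a y" "a \<in> S" "\<forall>x z. r x z \<longrightarrow> x \<in> S \<longrightarrow> z \<in> S"
  shows "y \<in> S"
  using assms by (induction rule: rtranclp_induct) auto

lemma exc_neg: "exc S (\<lambda>x y. - g x y) u = - exc S g u"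
  unfolding exc_def by (simp add: sum_negf)

lemma path_len2:
  assumes "p \<noteq> []" "hd p \<noteq> last p"
  shows "length p \<ge> 2"
proof (rule ccontr)
  assume "\<not> length p \<ge> 2"
  then obtain x where "p = [x]" using assms(1) by (cases p) (auto simp: not_le)
  then show False using assms by simp
qed

lemma aug_step:
  assumes fin: "finite S" and FS: "\<forall>e\<in>F. e \<subseteq> S"
    and conn: "\<forall>X. X \<subseteq> F \<and> card X < card A \<longrightarrow> connected_graph S (F - X)"
    and AS: "A \<subseteq> S" and tS: "t \<in> S" and tA: "t \<notin> A"
    and inv: "flowinv S F A t f" and lt: "card {a\<in>A. exc S f a = 1} < card A"
  shows "\<exists>f'. flowinv S F A t f' \<and> card {a\<in>A. exc S f' a = 1} = Suc (card {a\<in>A. exc S f a = 1})"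
proof -
  define B where "B = {a\<in>A. exc S f a = 1}"
  have finA: "finite A" using AS fin finite_subset by blast
  have BA: "B \<subseteq> A" unfolding B_def by auto
  have "B \<noteq> A" using lt unfolding B_def by auto
  then obtain a0 where a0: "a0 \<in> A" "a0 \<notin> B" using BA by blast
  have fa: "\<forall>x y. f x y = - f y x" "\<forall>x y. f x y \<in> {-1,0,1}" "\<forall>x y. f x y \<noteq> 0 \<longrightarrow> {x,y} \<in> F"
    "\<forall>x\<in>S. x \<notin> A \<longrightarrow> x \<noteq> t \<longrightarrow> exc S f x = 0" "\<forall>a\<in>A. exc S f a = 0 \<or> exc S f a = 1"
    using inv unfolding flowinv_def by blast+
  have ex0: "exc S f a0 = 0" using a0 fa(5) unfolding B_def by auto
  define res where "res = (\<lambda>x y. {x,y} \<in> F \<and> f x y < 1)"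
  define R where "R = {y. res\<^sup>*\<^sup>* a0 y}"
  have RS: "R \<subseteq> S"
  proof
    fix y assume "y \<in> R"
    then have "res\<^sup>*\<^sup>* a0 y" unfolding R_def by blast
    then show "y \<in> S"
      by (rule closure_in) (use a0 AS FS in \<open>auto simp: res_def\<close>)
  qed
  have tR: "t \<in> R"
  proof (rule ccontr)
    assume tR: "t \<notin> R"
    define Pairs where "Pairs = {(x,y). x \<in> R \<and> y \<in> S - R \<and> {x,y} \<in> F}"
    define X where "X = (\<lambda>(x,y). {x,y}) ` Pairs"
    have finR: "finite R" using RS fin finite_subset by blast
    have cross: "f x y = (if {x,y} \<in> F then 1 else 0)" if "x \<in> R" "y \<in> S - R" for x y
    proof (cases "{x,y} \<in> F")
      case True
      have "\<not> res x y"
      proof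
        assume "res x y"
        then have "y \<in> R" using that(1) unfolding R_def by (auto intro: rtranclp.rtrancl_into_rtrancl)
        then show False using that(2) by blast
      qed
      then show ?thesis using True fa(2)[rule_format, of x y] unfolding res_def by auto
    next
      case False
      then show ?thesis using fa(3) by auto
    qed
    have PR: "Pairs \<subseteq> R \<times> (S - R)" unfolding Pairs_def by auto
    have s1: "(\<Sum>x\<in>R. \<Sum>y\<in>S-R. f x y) = (\<Sum>(x,y)\<in>R \<times> (S - R). f x y)"
      by (simp add: sum.cartesian_product)
    also have "\<dots> = (\<Sum>(x,y)\<in>Pairs. f x y)"
    proof (rule sum.mono_neutral_right)
      show "finite (R \<times> (S - R))" using finR fin by blast
      show "Pairs \<subseteq> R \<times> (S - R)" by (rule PR)
      show "\<forall>i\<in>R \<times> (S - R) - Pairs. (case i of (x, y) \<Rightarrow> f x y) = 0"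
      proof
        fix i assume i: "i \<in> R \<times> (S - R) - Pairs"
        obtain x y where xy: "i = (x,y)" by (cases i)
        have "x \<in> R" "y \<in> S - R" "{x,y} \<notin> F" using i xy unfolding Pairs_def by auto
        then show "(case i of (x, y) \<Rightarrow> f x y) = 0" using cross xy by simp
      qed
    qed
    also have "\<dots> = (\<Sum>(x,y)\<in>Pairs. 1)"
      by (intro sum.cong refl) (use cross in \<open>auto simp: Pairs_def\<close>)
    also have "\<dots> = int (card Pairs)" by simp
    finally have s1: "(\<Sum>x\<in>R. \<Sum>y\<in>S-R. f x y) = int (card Pairs)" .
    have s2: "(\<Sum>x\<in>R. exc S f x) \<le> (\<Sum>x\<in>R. if x \<in> B then 1 else 0)"
    proof (rule sum_mono)
      fix x assume xR: "x \<in> R"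
      then have xS: "x \<in> S" using RS by blast
      show "exc S f x \<le> (if x \<in> B then 1 else 0)"
      proof (cases "x \<in> A")
        case True
        then show ?thesis using fa(5) unfolding B_def by auto
      next
        case False
        then have "x \<noteq> t" using xR tR by blast
        then show ?thesis using fa(4) xS False by auto
      qed
    qed
    have s3: "(\<Sum>x\<in>R. if x \<in> B then 1 else 0) = int (card {x\<in>R. x \<in> B})"
      using finR by (simp add: sum.inter_filter[symmetric])
    have "card {x\<in>R. x \<in> B} \<le> card B"
      using finA BA by (intro card_mono) (auto intro: finite_subset)
    then have "card Pairs \<le> card B"
      using s1 s2 s3 cut_sum[OF fin RS fa(1)] by linarith
    moreover have "card X \<le> card Pairs" unfolding X_def
      by (rule card_image_le) (rule finite_subset[OF PR], use finR fin in blast)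
    ultimately have cX: "card X < card A" using lt unfolding B_def by linarith
    have XF: "X \<subseteq> F" unfolding X_def Pairs_def by auto
    have "connected_graph S (F - X)" using conn XF cX by blast
    then have path: "(\<lambda>x y. {x,y} \<in> F - X)\<^sup>*\<^sup>* a0 t"
      unfolding connected_graph_def using a0 AS tS by blast
    have "t \<in> R"
      using path
    proof (induction rule: rtranclp_induct)
      case base
      then show ?case unfolding R_def by simp
    next
      case (step y z)
      show ?case
      proof (rule ccontr)
        assume "z \<notin> R"
        moreover have "z \<in> S" using step(2) FS by auto
        ultimately have "(y,z) \<in> Pairs" using step unfolding Pairs_def by auto
        then have "{y,z} \<in> X" unfolding X_def by force
        then show False using step(2) by blast
      qed
    qed
    then show False using tR by blast
  qed
  then have "res\<^sup>*\<^sup>* a0 t" unfolding R_def by blast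
  then obtain p where p: "p \<noteq> []" "hd p = a0" "last p = t" "distinct p" "chainr res p"
    using rtranclp_distinct_chain[of res a0 t] by blast
  obtain f' where f': "\<forall>x y. f' x y = - f' y x" "\<forall>x y. f' x y \<in> {-1,0,1}" "\<forall>x y. f' x y \<noteq> 0 \<longrightarrow> {x,y} \<in> F"
      "\<forall>u. exc S f' u = exc S f u + (if u = hd p then 1 else 0) - (if u = last p then 1 else 0)"
    using augment[OF fin FS p(4) p(1) p(5)[unfolded res_def] fa(1,2,3)]
    apply - apply (elim exE conjE) apply (rule that) by assumption+
  have a0t: "a0 \<noteq> t" using a0 tA by blast
  have inv': "flowinv S F A t f'"
    unfolding flowinv_def
  proof (intro conjI)
    show "\<forall>x\<in>S. x \<notin> A \<longrightarrow> x \<noteq> t \<longrightarrow> exc S f' x = 0"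
      using f'(4) fa(4) p(2,3) a0 by auto
    show "\<forall>a\<in>A. exc S f' a = 0 \<or> exc S f' a = 1"
      using f'(4) fa(5) p(2,3) ex0 tA by auto
  qed (use f' in blast)+
  have "{a\<in>A. exc S f' a = 1} = insert a0 B"
    using f'(4) p(2,3) ex0 tA a0 unfolding B_def by auto
  moreover have "card (insert a0 B) = Suc (card B)"
    using a0 finite_subset[OF BA finA] by simp
  ultimately show ?thesis using inv' unfolding B_def by auto
qed




lemma dec_step:
  assumes fin: "finite S" and FS: "\<forall>e\<in>F. e \<subseteq> S"
    and AS: "A \<subseteq> S" and tA: "t \<notin> A"
    and inv: "flowinv S F A t f" and a: "a \<in> A" "exc S f a = 1"
  shows "\<exists>p f'. flowinv S F A t f' \<and> path_between F a t p \<and> path_edges p \<subseteq> supp f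
     \<and> supp f' \<subseteq> supp f - path_edges p
     \<and> {b\<in>A. exc S f' b = 1} = {b\<in>A. exc S f b = 1} - {a}"
proof -
  have fa: "\<forall>x y. f x y = - f y x" "\<forall>x y. f x y \<in> {-1,0,1}" "\<forall>x y. f x y \<noteq> 0 \<longrightarrow> {x,y} \<in> F"
    "\<forall>x\<in>S. x \<notin> A \<longrightarrow> x \<noteq> t \<longrightarrow> exc S f x = 0" "\<forall>a\<in>A. exc S f a = 0 \<or> exc S f a = 1"
    using inv unfolding flowinv_def by blast+
  define pos where "pos = (\<lambda>x y. f x y = 1)"
  define R where "R = {y. pos\<^sup>*\<^sup>* a y}"
  have aS: "a \<in> S" using a AS by blast
  have RS: "R \<subseteq> S"
  proof
    fix y assume "y \<in> R"
    then have "pos\<^sup>*\<^sup>* a y" unfolding R_def by blast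
    then show "y \<in> S"
    proof (rule closure_in[OF _ aS], intro allI impI)
      fix x z assume "pos x z"
      then have "{x,z} \<in> F" using fa(3) unfolding pos_def by auto
      then show "z \<in> S" using FS by blast
    qed
  qed
  have finR: "finite R" using RS fin finite_subset by blast
  have tR: "t \<in> R"
  proof (rule ccontr)
    assume tR: "t \<notin> R"
    have nn: "\<forall>x\<in>R. 0 \<le> exc S f x"
    proof
      fix x assume xR: "x \<in> R"
      show "0 \<le> exc S f x"
      proof (cases "x \<in> A")
        case True then show ?thesis using fa(5) by force
      next
        case False
        then show ?thesis using fa(4) xR RS tR by force
      qed
    qed
    have aR: "a \<in> R" unfolding R_def by simp
    have "exc S f a \<le> (\<Sum>x\<in>R. exc S f x)"
      using nn aR finR by (intro member_le_sum) auto
    moreover have "(\<Sum>x\<in>R. \<Sum>y\<in>S-R. f x y) \<le> 0"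
    proof (intro sum_nonpos ballI)
      fix x y assume xR: "x \<in> R" and y: "y \<in> S - R"
      have "f x y \<noteq> 1"
      proof
        assume "f x y = 1"
        then have "y \<in> R" using xR unfolding R_def pos_def by (auto intro: rtranclp.rtrancl_into_rtrancl)
        then show False using y by blast
      qed
      then show "f x y \<le> 0" using fa(2) by force
    qed
    ultimately show False using cut_sum[OF fin RS fa(1)] a(2) by linarith
  qed
  then have "pos\<^sup>*\<^sup>* a t" unfolding R_def by blast
  then obtain p where p: "p \<noteq> []" "hd p = a" "last p = t" "distinct p" "chainr pos p"
    using rtranclp_distinct_chain[of pos a t] by blast
  define g where "g = (\<lambda>x y. - f x y)"
  have ga: "\<forall>x y. g x y = - g y x" using fa(1) unfolding g_def by (metis minus_minus)
  have gb: "\<forall>x y. g x y \<in> {-1,0,1}" using fa(2) unfolding g_def by force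
  have gc: "\<forall>x y. g x y \<noteq> 0 \<longrightarrow> {x,y} \<in> F" using fa(3) unfolding g_def by simp
  have gch: "chainr (\<lambda>x y. {x,y} \<in> F \<and> g x y < 1) p"
    using p(5) fa(3) unfolding chainr_def pos_def g_def by fastforce
  obtain g' where g': "\<forall>x y. g' x y = - g' y x" "\<forall>x y. g' x y \<in> {-1,0,1}" "\<forall>x y. g' x y \<noteq> 0 \<longrightarrow> {x,y} \<in> F"
      "\<forall>u. exc S g' u = exc S g u + (if u = hd p then 1 else 0) - (if u = last p then 1 else 0)"
      "\<forall>x y. {x,y} \<notin> path_edges p \<longrightarrow> g' x y = g x y"
      "\<forall>i. Suc i < length p \<longrightarrow> g' (p!i) (p!Suc i) = g (p!i) (p!Suc i) + 1"
    using augment[OF fin FS p(4) p(1) gch ga gb gc]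
    apply - apply (elim exE conjE) apply (rule that) by assumption+
  define f' where "f' = (\<lambda>x y. - g' x y)"
  have f'a: "\<forall>x y. f' x y = - f' y x" using g'(1) unfolding f'_def by (metis minus_minus)
  have f'b: "\<forall>x y. f' x y \<in> {-1,0,1}" using g'(2) unfolding f'_def by force
  have f'c: "\<forall>x y. f' x y \<noteq> 0 \<longrightarrow> {x,y} \<in> F" using g'(3) unfolding f'_def by simp
  have excg: "exc S g u = - exc S f u" for u unfolding g_def by (rule exc_neg)
  have excf': "exc S f' u = exc S f u - (if u = a then 1 else 0) + (if u = t then 1 else 0)" for u
    unfolding f'_def exc_neg using g'(4) excg p(2,3) by simp
  have inv': "flowinv S F A t f'"
    unfolding flowinv_def
  proof (intro conjI)
    show "\<forall>x\<in>S. x \<notin> A \<longrightarrow> x \<noteq> t \<longrightarrow> exc S f' x = 0"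
      using excf' fa(4) a(1) by auto
    show "\<forall>b\<in>A. exc S f' b = 0 \<or> exc S f' b = 1"
      using excf' fa(5) a tA by auto
  qed (use f'a f'b f'c in blast)+
  have ne: "hd p \<noteq> last p" using p(2,3) a(1) tA by auto
  have ip: "is_path F p" unfolding is_path_def
  proof (intro conjI allI impI)
    show "2 \<le> length p" using path_len2[OF p(1) ne] .
    show "distinct p" by (rule p(4))
    fix i assume "Suc i < length p"
    then have "f (p!i) (p!Suc i) = 1" using p(5) unfolding chainr_def pos_def by blast
    then show "{p!i, p!Suc i} \<in> F" using fa(3) by force
  qed
  have pe: "path_edges p \<subseteq> supp f"
  proof
    fix e assume "e \<in> path_edges p"
    then obtain i where i: "e = {p!i, p!Suc i}" "Suc i < length p" unfolding path_edges_def by blast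
    then have "f (p!i) (p!Suc i) = 1" using p(5) unfolding chainr_def pos_def by blast
    then show "e \<in> supp f" unfolding supp_def using i by force
  qed
  have sp: "supp f' \<subseteq> supp f - path_edges p"
  proof
    fix e assume "e \<in> supp f'"
    then obtain x y where xy: "e = {x,y}" "f' x y \<noteq> 0" unfolding supp_def by blast
    show "e \<in> supp f - path_edges p"
    proof (cases "e \<in> path_edges p")
      case True
      then obtain i where i: "e = {p!i, p!Suc i}" "Suc i < length p" unfolding path_edges_def by blast
      have f1: "f (p!i) (p!Suc i) = 1" using i p(5) unfolding chainr_def pos_def by blast
      have z: "f' (p!i) (p!Suc i) = 0" using g'(6) i(2) f1 unfolding f'_def g_def by simp
      have "(x = p!i \<and> y = p!Suc i) \<or> (x = p!Suc i \<and> y = p!i)" using xy(1) i(1) by (auto simp: doubleton_eq_iff)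
      then have "f' x y = 0"
      proof
        assume "x = p!i \<and> y = p!Suc i" then show ?thesis using z by simp
      next
        assume "x = p!Suc i \<and> y = p!i" then show ?thesis using z f'a by (metis minus_zero)
      qed
      then show ?thesis using xy(2) by blast
    next
      case False
      then have "f' x y = f x y" using g'(5) xy(1) unfolding f'_def g_def by simp
      then show ?thesis using xy False unfolding supp_def by auto
    qed
  qed
  have "{b\<in>A. exc S f' b = 1} = {b\<in>A. exc S f b = 1} - {a}"
    using excf' a tA by auto
  then show ?thesis using inv' ip p(2,3) pe sp unfolding path_between_def by blast
qed




lemma build:
  assumes fin: "finite S" and FS: "\<forall>e\<in>F. e \<subseteq> S"
    and conn: "\<forall>X. X \<subseteq> F \<and> card X < card A \<longrightarrow> connected_graph S (F - X)"
    and AS: "A \<subseteq> S" and tS: "t \<in> S" and tA: "t \<notin> A"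
  shows "k \<le> card A \<Longrightarrow> \<exists>f. flowinv S F A t f \<and> card {a\<in>A. exc S f a = 1} = k"
proof (induction k)
  case 0
  have "flowinv S F A t (\<lambda>_ _. 0)" unfolding flowinv_def exc_def by simp
  moreover have "{a\<in>A. exc S (\<lambda>_ _. 0) a = 1} = {}" unfolding exc_def by simp
  ultimately show ?case by (intro exI[of _ "\<lambda>_ _. 0"]) (simp only: card.empty)
next
  case (Suc k)
  then obtain f where f: "flowinv S F A t f" "card {a\<in>A. exc S f a = 1} = k" by auto
  then have "card {a\<in>A. exc S f a = 1} < card A" using Suc.prems by simp
  then show ?case using aug_step[OF fin FS conn AS tS tA f(1)] f(2) by auto
qed

lemma decomp:
  assumes fin: "finite S" and FS: "\<forall>e\<in>F. e \<subseteq> S"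
    and AS: "A \<subseteq> S" and tA: "t \<notin> A"
  shows "flowinv S F A t f \<Longrightarrow> card {a\<in>A. exc S f a = 1} = k \<Longrightarrow>
    \<exists>q. \<forall>a\<in>{a\<in>A. exc S f a = 1}. path_between F a t (q a) \<and> path_edges (q a) \<subseteq> supp f \<and>
      (\<forall>b\<in>{a\<in>A. exc S f a = 1}. a \<noteq> b \<longrightarrow> path_edges (q a) \<inter> path_edges (q b) = {})"
proof (induction k arbitrary: f)
  case 0
  have finA: "finite A" using AS fin finite_subset by blast
  then have e: "{a\<in>A. exc S f a = 1} = {}" using 0 by simp
  show ?case unfolding e by blast
next
  case (Suc k)
  have finA: "finite A" using AS fin finite_subset by blast
  let ?B = "{a\<in>A. exc S f a = 1}"
  have "?B \<noteq> {}" using Suc.prems(2) by (metis card.empty nat.distinct(1))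
  then obtain a where a: "a \<in> A" "exc S f a = 1" by blast
  obtain p f' where pf: "flowinv S F A t f'" "path_between F a t p" "path_edges p \<subseteq> supp f"
     "supp f' \<subseteq> supp f - path_edges p" "{b\<in>A. exc S f' b = 1} = ?B - {a}"
    using dec_step[OF fin FS AS tA Suc.prems(1) a] by blast
  have "card (?B - {a}) = k" using Suc.prems(2) a finA by simp
  then obtain q' where q': "\<forall>b\<in>?B - {a}. path_between F b t (q' b) \<and> path_edges (q' b) \<subseteq> supp f' \<and>
      (\<forall>c\<in>?B - {a}. b \<noteq> c \<longrightarrow> path_edges (q' b) \<inter> path_edges (q' c) = {})"
    using Suc.IH[OF pf(1)] pf(5) by auto
  show ?case
  proof (intro exI[of _ "q'(a := p)"] ballI conjI impI)
    fix b assume b: "b \<in> ?B"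
    show "path_between F b t ((q'(a := p)) b)" using q' pf(2) b by auto
    show "path_edges ((q'(a := p)) b) \<subseteq> supp f"
    proof (cases "b = a")
      case False
      then have "path_edges (q' b) \<subseteq> supp f'" using q' b by blast
      then show ?thesis using False pf(4) by auto
    qed (use pf(3) in auto)
    fix c assume c: "c \<in> ?B" "b \<noteq> c"
    show "path_edges ((q'(a := p)) b) \<inter> path_edges ((q'(a := p)) c) = {}"
    proof (cases "b = a")
      case True
      then have "c \<in> ?B - {a}" using c by auto
      then show ?thesis using True q' pf(4) c by auto
    next
      case False
      note F1 = this
      show ?thesis
      proof (cases "c = a")
        case True
        then show ?thesis using F1 q' pf(4) b by auto
      next
        case False
        then show ?thesis using F1 q' b c by auto
      qed
    qed
  qed
qed

lemma fan:
  assumes fin: "finite S" and FS: "\<forall>e\<in>F. e \<subseteq> S"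
    and conn: "\<forall>X. X \<subseteq> F \<and> card X < card A \<longrightarrow> connected_graph S (F - X)"
    and AS: "A \<subseteq> S" and tS: "t \<in> S" and tA: "t \<notin> A"
  shows "\<exists>q. \<forall>a\<in>A. path_between F a t (q a) \<and>
      (\<forall>b\<in>A. a \<noteq> b \<longrightarrow> path_edges (q a) \<inter> path_edges (q b) = {})"
proof -
  have finA: "finite A" using AS fin finite_subset by blast
  obtain f where f: "flowinv S F A t f" "card {a\<in>A. exc S f a = 1} = card A"
    using build[OF fin FS conn AS tS tA, of "card A"] by auto
  have "{a\<in>A. exc S f a = 1} = A"
    using f(2) finA by (intro card_subset_eq) auto
  then show ?thesis using decomp[OF fin FS AS tA f] by metis
qed




lemma edge_in_path_edges: "Suc i < length p \<Longrightarrow> {p!i, p!Suc i} \<in> path_edges p"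
  unfolding path_edges_def by blast

lemma path_edges_sub: "is_path F p \<Longrightarrow> path_edges p \<subseteq> F"
  unfolding is_path_def path_edges_def by auto

lemma path_edges_rev_sub: "path_edges (rev p) \<subseteq> path_edges p"
proof
  fix e assume "e \<in> path_edges (rev p)"
  then obtain i where i: "e = {rev p ! i, rev p ! Suc i}" "Suc i < length p" unfolding path_edges_def by auto
  define j where "j = length p - Suc (Suc i)"
  have j: "Suc j < length p" "rev p ! i = p ! Suc j" "rev p ! Suc i = p ! j"
    using i(2) unfolding j_def by (auto simp: rev_nth Suc_diff_Suc)
  have "e = {p!j, p!Suc j}" using i(1) j by auto
  then show "e \<in> path_edges p" using j(1) edge_in_path_edges by blast
qed

lemma path_edges_rev: "path_edges (rev p) = path_edges p"
  using path_edges_rev_sub[of p] path_edges_rev_sub[of "rev p"] by auto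

lemma is_path_rev: "is_path F p \<Longrightarrow> is_path F (rev p)"
proof -
  assume p: "is_path F p"
  have "path_edges (rev p) \<subseteq> F" using path_edges_rev path_edges_sub[OF p] by auto
  then show "is_path F (rev p)" using p unfolding is_path_def
    by (auto intro: edge_in_path_edges[THEN subsetD[rotated]])
qed

lemma path_edges_Cons: "q \<noteq> [] \<Longrightarrow> path_edges (x # q) = insert {x, hd q} (path_edges q)"
  by (cases q) (auto simp: path_edges_Cons2)

lemma is_path_Cons:
  assumes "is_path F q" "x \<notin> set q" "{x, hd q} \<in> F"
  shows "is_path F (x # q)"
  unfolding is_path_def
proof (intro conjI allI impI)
  show "2 \<le> length (x # q)" using assms(1) unfolding is_path_def by simp
  show "distinct (x # q)" using assms(1,2) unfolding is_path_def by simp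
  fix i assume i: "Suc i < length (x # q)"
  show "{(x # q) ! i, (x # q) ! Suc i} \<in> F"
  proof (cases i)
    case 0
    have "q \<noteq> []" using assms(1) unfolding is_path_def by auto
    then show ?thesis using 0 assms(3) by (simp add: hd_conv_nth)
  next
    case (Suc j)
    then show ?thesis using i assms(1) unfolding is_path_def by auto
  qed
qed

lemma set_path_sub:
  assumes "is_path F p" "\<forall>e\<in>F. e \<subseteq> W"
  shows "set p \<subseteq> W"
proof
  fix x assume "x \<in> set p"
  then obtain k where k: "k < length p" "p ! k = x" by (auto simp: in_set_conv_nth)
  have l: "length p \<ge> 2" using assms(1) unfolding is_path_def by simp
  show "x \<in> W"
  proof (cases "Suc k < length p")
    case True
    then have "{p!k, p!Suc k} \<in> F" using assms(1) unfolding is_path_def by blast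
    then show ?thesis using assms(2) k by blast
  next
    case False
    then have "k = Suc (k - 1)" "Suc (k - 1) < length p" using k l by auto
    then have "{p!(k-1), p!k} \<in> F" using assms(1) unfolding is_path_def by (metis)
    then show ?thesis using assms(2) k by blast
  qed
qed

lemma interior_nth: "0 < i \<Longrightarrow> Suc i < length p \<Longrightarrow> p ! i \<in> interior p"
proof -
  assume i: "0 < i" "Suc i < length p"
  have "butlast (tl p) ! (i - 1) = p ! i" using i by (simp add: nth_butlast nth_tl)
  moreover have "i - 1 < length (butlast (tl p))" using i by simp
  ultimately show ?thesis unfolding interior_def by (metis nth_mem)
qed

lemma interior_ends:
  assumes "distinct p" "p \<noteq> []"
  shows "hd p \<notin> interior p" "last p \<notin> interior p"
proof -
  obtain x r where p: "p = x # r" using assms(2) by (cases p) auto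
  show "hd p \<notin> interior p" using assms(1) p unfolding interior_def by (auto dest: in_set_butlastD)
  show "last p \<notin> interior p"
  proof
    assume "last p \<in> interior p"
    then have "last p \<in> set (butlast (tl p))" unfolding interior_def by simp
    then have "last p \<in> set (butlast p)" using p by (cases r) auto
    moreover have "distinct (butlast p @ [last p])" using assms by simp
    ultimately show False by simp
  qed
qed

lemma nth_cases3:
  assumes "distinct p" "p \<noteq> []" "k < length p"
  shows "p ! k = hd p \<or> p ! k = last p \<or> p ! k \<in> interior p"
proof -
  consider "k = 0" | "k = length p - 1" | "0 < k" "Suc k < length p" using assms by linarith
  then show ?thesis
  proof cases
    case 1 then show ?thesis using assms by (simp add: hd_conv_nth)
  next
    case 2 then show ?thesis using assms by (simp add: last_conv_nth)
  next
    case 3 then show ?thesis using interior_nth by blast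
  qed
qed

lemma shared_edge_len2:
  assumes p: "path_between E v1 v2 p" and q: "path_between E v1 v2 q"
    and d: "interior p \<inter> interior q = {}"
    and e: "e \<in> path_edges p" "e \<in> path_edges q"
  shows "length p = 2"
proof -
  have pp: "distinct p" "p \<noteq> []" "hd p = v1" "last p = v2" "length p \<ge> 2"
    using p unfolding path_between_def is_path_def by auto
  have qq: "distinct q" "q \<noteq> []" "hd q = v1" "last q = v2"
    using q unfolding path_between_def is_path_def by auto
  obtain i where i: "e = {p!i, p!Suc i}" "Suc i < length p" using e(1) unfolding path_edges_def by blast
  obtain j where j: "e = {q!j, q!Suc j}" "Suc j < length q" using e(2) unfolding path_edges_def by blast
  have qv: "\<forall>z\<in>e. z = v1 \<or> z = v2 \<or> z \<in> interior q"
    using j nth_cases3[OF qq(1,2)] qq(3,4) by auto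
  have notint: "z \<notin> interior p" if "z \<in> e" for z
  proof
    assume zi: "z \<in> interior p"
    then have "z \<noteq> v1" "z \<noteq> v2" using interior_ends[OF pp(1,2)] pp(3,4) by auto
    then have "z \<in> interior q" using qv that by blast
    then show False using d zi by blast
  qed
  have "i = 0"
  proof (rule ccontr)
    assume "i \<noteq> 0"
    then have "p!i \<in> interior p" using interior_nth i(2) by blast
    then show False using notint i(1) by blast
  qed
  moreover have "Suc (Suc i) \<ge> length p"
  proof (rule ccontr)
    assume "\<not> Suc (Suc i) \<ge> length p"
    then have "p!Suc i \<in> interior p" using interior_nth[of "Suc i" p] by (simp add: not_le)
    then show False using notint i(1) by blast
  qed
  ultimately show ?thesis using pp(5) by simp
qed

lemma len2_eq:
  assumes "path_between E v1 v2 p" "length p = 2"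
  shows "p = [v1, v2]"
proof -
  obtain x y where "p = [x,y]" using assms(2)
    by (auto simp: length_Suc_conv numeral_2_eq_2)
  then show ?thesis using assms(1) unfolding path_between_def by simp
qed

lemma indisj_edisj:
  assumes p: "path_between E v1 v2 p" and q: "path_between E v1 v2 q"
    and d: "interior p \<inter> interior q = {}" and ne: "p \<noteq> q"
  shows "path_edges p \<inter> path_edges q = {}"
proof (rule ccontr)
  assume "path_edges p \<inter> path_edges q \<noteq> {}"
  then obtain e where e: "e \<in> path_edges p" "e \<in> path_edges q" by blast
  have "length p = 2" using shared_edge_len2[OF p q d e] .
  moreover have "length q = 2" using shared_edge_len2[OF q p _ e(2,1)] d by blast
  ultimately show False using len2_eq[OF p] len2_eq[OF q] ne by simp
qed




lemma is_path_mono: "is_path F p \<Longrightarrow> F \<subseteq> G \<Longrightarrow> is_path G p"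
  unfolding is_path_def by blast

lemma path_edges_nonempty: "is_path F p \<Longrightarrow> path_edges p \<noteq> {}"
  unfolding is_path_def using edge_in_path_edges[of 0 p] by auto

lemma path_edge_nonempty: "e \<in> path_edges p \<Longrightarrow> e \<noteq> {}"
  unfolding path_edges_def by auto

theorem proposition1:
  fixes V1 V2 :: "'a set" and E :: "'a set set" and n m :: nat and v1 v2 :: 'a
  assumes graph: "simple_graph (V1 \<union> V2) E"
    and disj: "V1 \<inter> V2 = {}"
    and conn1: "edge_connectivity_ge V1 (induced_edges E V1) n"
    and conn2: "edge_connectivity_ge V2 (induced_edges E V2) n"
    and deg: "\<forall>x\<in>V1. card {y \<in> V2. {x, y} \<in> E} \<ge> m"
    and mn: "m \<ge> n + 2"
    and v1: "v1 \<in> V1" and v2: "v2 \<in> V2" and adj: "{v1, v2} \<in> E"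
    and paths: "\<exists>P. card P = m \<and> finite P \<and>
       (\<forall>p\<in>P. path_between E v1 v2 p \<and>
          (\<forall>e\<in>path_edges p. \<exists>x y. e = {x, y} \<and> x \<in> V1 \<and> y \<in> V2)) \<and>
       (\<forall>p\<in>P. \<forall>q\<in>P. p \<noteq> q \<longrightarrow> interior p \<inter> interior q = {})"
  shows "\<exists>Q. card Q = m + n \<and> finite Q \<and>
       (\<forall>p\<in>Q. path_between E v1 v2 p) \<and>
       (\<forall>p\<in>Q. \<forall>q\<in>Q. p \<noteq> q \<longrightarrow> path_edges p \<inter> path_edges q = {})"
proof -
  obtain P where Pall: "card P = m" "finite P"
    "\<forall>p\<in>P. path_between E v1 v2 p \<and> (\<forall>e\<in>path_edges p. \<exists>x y. e = {x, y} \<and> x \<in> V1 \<and> y \<in> V2)"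
    "\<forall>p\<in>P. \<forall>q\<in>P. p \<noteq> q \<longrightarrow> interior p \<inter> interior q = {}"
    using paths by (elim exE conjE) (rule that; assumption)
  have P: "card P = m" "finite P"
    "\<forall>p\<in>P. path_between E v1 v2 p" "\<forall>p\<in>P. \<forall>e\<in>path_edges p. \<exists>x y. e = {x, y} \<and> x \<in> V1 \<and> y \<in> V2"
    "\<forall>p\<in>P. \<forall>q\<in>P. p \<noteq> q \<longrightarrow> interior p \<inter> interior q = {}"
    using Pall by blast+
  have finV: "finite V1" "finite V2" using graph unfolding simple_graph_def by auto
  have v12: "v1 \<noteq> v2" using v1 v2 disj by blast
  have Pdisj: "\<forall>p\<in>P. \<forall>q\<in>P. p \<noteq> q \<longrightarrow> path_edges p \<inter> path_edges q = {}"
  proof (intro ballI impI)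
    fix p q assume "p \<in> P" "q \<in> P" "p \<noteq> q"
    then show "path_edges p \<inter> path_edges q = {}"
      using indisj_edisj[of E v1 v2 p q] P(3,5) by blast
  qed
  have cross_not: "\<not> (\<exists>x y. e = {x, y} \<and> x \<in> V1 \<and> y \<in> V2)" if "e \<subseteq> V1 \<or> e \<subseteq> V2" for e
  proof
    assume "\<exists>x y. e = {x, y} \<and> x \<in> V1 \<and> y \<in> V2"
    then obtain x y where "e = {x, y}" "x \<in> V1" "y \<in> V2" by blast
    then show False using that disj by blast
  qed
  define P1 where "P1 = P - {[v1,v2]}"
  have "card P1 \<ge> n" unfolding P1_def using mn P(1) by (simp add: card_Diff_singleton_if; linarith)
  then obtain P0 where P0: "P0 \<subseteq> P1" "card P0 = n" "finite P0"
    by (meson obtain_subset_with_card_n)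
  have P0P: "P0 \<subseteq> P" using P0(1) unfolding P1_def by blast
  define a where "a = (\<lambda>p::'a list. p ! 1)"
  define b where "b = (\<lambda>p::'a list. p ! (length p - 2))"
  have key: "a p \<in> V2 \<and> b p \<in> V1 \<and> a p \<in> interior p \<and> b p \<in> interior p \<and>
     {v1, a p} \<in> path_edges p \<and> {b p, v2} \<in> path_edges p \<and> a p \<noteq> v2 \<and> b p \<noteq> v1" if pP0: "p \<in> P0" for p
  proof -
    have pP: "p \<in> P" "p \<noteq> [v1,v2]" using pP0 P0(1) unfolding P1_def by auto
    have pb: "path_between E v1 v2 p" using P(3) pP by blast
    have pd: "distinct p" "length p \<ge> 2" "hd p = v1" "last p = v2"
      using pb unfolding path_between_def is_path_def by auto
    have "length p \<noteq> 2" using len2_eq[OF pb] pP(2) by blast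
    then have l3: "length p \<ge> 3" using pd(2) by simp
    have pne: "p \<noteq> []" using l3 by auto
    have p0: "p ! 0 = v1" using pd(3) hd_conv_nth[OF pne] by simp
    have pl: "p ! (length p - 1) = v2" using pd(4) last_conv_nth[OF pne] by simp
    have e0: "{v1, a p} \<in> path_edges p" using edge_in_path_edges[of 0 p] l3 p0 unfolding a_def by simp
    have sl: "Suc (length p - 2) = length p - 1" using l3 by simp
    have el: "{b p, v2} \<in> path_edges p" using edge_in_path_edges[of "length p - 2" p] l3 pl sl unfolding b_def by simp
    obtain x y where xy: "{v1, a p} = {x,y}" "x \<in> V1" "y \<in> V2" using P(4) pP(1) e0 by blast
    have aV2: "a p \<in> V2" using xy v1 disj by (auto simp: doubleton_eq_iff)
    obtain x' y' where xy': "{b p, v2} = {x',y'}" "x' \<in> V1" "y' \<in> V2" using P(4) pP(1) el by blast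
    have bV1: "b p \<in> V1" using xy' v2 disj by (auto simp: doubleton_eq_iff)
    have ai: "a p \<in> interior p" unfolding a_def using interior_nth[of 1 p] l3 by simp
    have bi: "b p \<in> interior p" unfolding b_def using interior_nth[of "length p - 2" p] l3 sl by simp
    have "v1 \<notin> interior p" "v2 \<notin> interior p" using interior_ends[OF pd(1) pne] pd(3,4) by auto
    then show ?thesis using aV2 bV1 ai bi e0 el by auto
  qed
  have ainj: "inj_on a P0"
  proof (rule inj_onI)
    fix p q assume pq: "p \<in> P0" "q \<in> P0" "a p = a q"
    show "p = q"
    proof (rule ccontr)
      assume "p \<noteq> q"
      then have "interior p \<inter> interior q = {}" using P(5) P0P pq by blast
      moreover have "a p \<in> interior p" "a q \<in> interior q" using key[OF pq(1)] key[OF pq(2)] by blast+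
      ultimately show False using pq(3) by (metis IntI empty_iff)
    qed
  qed
  have binj: "inj_on b P0"
  proof (rule inj_onI)
    fix p q assume pq: "p \<in> P0" "q \<in> P0" "b p = b q"
    show "p = q"
    proof (rule ccontr)
      assume "p \<noteq> q"
      then have "interior p \<inter> interior q = {}" using P(5) P0P pq by blast
      moreover have "b p \<in> interior p" "b q \<in> interior q" using key[OF pq(1)] key[OF pq(2)] by blast+
      ultimately show False using pq(3) by (metis IntI empty_iff)
    qed
  qed
  have cardA: "card (a ` P0) = n" using ainj P0(2) by (simp add: card_image)
  have cardB: "card (b ` P0) = n" using binj P0(2) by (simp add: card_image)
  have conn2': "\<forall>X. X \<subseteq> induced_edges E V2 \<and> card X < card (a ` P0) \<longrightarrow> connected_graph V2 (induced_edges E V2 - X)"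
    using conn2 cardA unfolding edge_connectivity_ge_def edge_connected_def by auto
  have conn1': "\<forall>X. X \<subseteq> induced_edges E V1 \<and> card X < card (b ` P0) \<longrightarrow> connected_graph V1 (induced_edges E V1 - X)"
    using conn1 cardB unfolding edge_connectivity_ge_def edge_connected_def by auto
  have FS2: "\<forall>e\<in>induced_edges E V2. e \<subseteq> V2" and FS1: "\<forall>e\<in>induced_edges E V1. e \<subseteq> V1"
    unfolding induced_edges_def by blast+
  have AS2: "a ` P0 \<subseteq> V2" and AS1: "b ` P0 \<subseteq> V1" using key by blast+
  have tA2: "v2 \<notin> a ` P0" and tA1: "v1 \<notin> b ` P0" using key by fastforce+
  obtain q2 where q2: "\<forall>x\<in>a ` P0. path_between (induced_edges E V2) x v2 (q2 x) \<and>
      (\<forall>y\<in>a ` P0. x \<noteq> y \<longrightarrow> path_edges (q2 x) \<inter> path_edges (q2 y) = {})"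
    using fan[OF finV(2) FS2 conn2' AS2 v2 tA2] by blast
  obtain q1 where q1: "\<forall>x\<in>b ` P0. path_between (induced_edges E V1) x v1 (q1 x) \<and>
      (\<forall>y\<in>b ` P0. x \<noteq> y \<longrightarrow> path_edges (q1 x) \<inter> path_edges (q1 y) = {})"
    using fan[OF finV(1) FS1 conn1' AS1 v1 tA1] by blast
  define PA where "PA = (\<lambda>p. v1 # q2 (a p))"
  define PB where "PB = (\<lambda>p. rev (v2 # q1 (b p)))"
  have indE: "induced_edges E W \<subseteq> E" for W unfolding induced_edges_def by auto
  have PAp: "path_between E v1 v2 (PA p) \<and> path_edges (PA p) = insert {v1, a p} (path_edges (q2 (a p)))
     \<and> (\<forall>e\<in>path_edges (q2 (a p)). e \<subseteq> V2) \<and> hd (q2 (a p)) = a p" if pP0: "p \<in> P0" for p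
  proof -
    have qp: "path_between (induced_edges E V2) (a p) v2 (q2 (a p))" using q2 pP0 by blast
    have ip: "is_path (induced_edges E V2) (q2 (a p))" "hd (q2 (a p)) = a p" "last (q2 (a p)) = v2"
      using qp unfolding path_between_def by auto
    have ne: "q2 (a p) \<noteq> []" using ip(1) unfolding is_path_def by auto
    have sV: "set (q2 (a p)) \<subseteq> V2" using set_path_sub[OF ip(1)] unfolding induced_edges_def by blast
    have v1n: "v1 \<notin> set (q2 (a p))" using sV v1 disj by blast
    have ed: "{v1, a p} \<in> E" using key[OF pP0] P(3) P0P pP0 path_edges_sub unfolding path_between_def by blast
    have "is_path E (v1 # q2 (a p))"
      by (rule is_path_Cons[OF is_path_mono[OF ip(1) indE] v1n]) (use ed ip(2) in simp)
    moreover have "path_edges (PA p) = insert {v1, a p} (path_edges (q2 (a p)))"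
      unfolding PA_def using path_edges_Cons[OF ne] ip(2) by simp
    moreover have "\<forall>e\<in>path_edges (q2 (a p)). e \<subseteq> V2"
      using path_edges_sub[OF ip(1)] unfolding induced_edges_def by blast
    ultimately show ?thesis using ip ne unfolding PA_def path_between_def by simp
  qed
  have PBp: "path_between E v1 v2 (PB p) \<and> path_edges (PB p) = insert {v2, b p} (path_edges (q1 (b p)))
     \<and> (\<forall>e\<in>path_edges (q1 (b p)). e \<subseteq> V1) \<and> hd (q1 (b p)) = b p" if pP0: "p \<in> P0" for p
  proof -
    have qp: "path_between (induced_edges E V1) (b p) v1 (q1 (b p))" using q1 pP0 by blast
    have ip: "is_path (induced_edges E V1) (q1 (b p))" "hd (q1 (b p)) = b p" "last (q1 (b p)) = v1"
      using qp unfolding path_between_def by auto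
    have ne: "q1 (b p) \<noteq> []" using ip(1) unfolding is_path_def by auto
    have sV: "set (q1 (b p)) \<subseteq> V1" using set_path_sub[OF ip(1)] unfolding induced_edges_def by blast
    have v2n: "v2 \<notin> set (q1 (b p))" using sV v2 disj by blast
    have ed: "{b p, v2} \<in> E" using key[OF pP0] P(3) P0P pP0 path_edges_sub unfolding path_between_def by blast
    have ip2: "is_path E (v2 # q1 (b p))"
      by (rule is_path_Cons[OF is_path_mono[OF ip(1) indE] v2n]) (use ed ip(2) in \<open>simp add: insert_commute\<close>)
    have "is_path E (PB p)" unfolding PB_def by (rule is_path_rev[OF ip2])
    moreover have "path_edges (PB p) = insert {v2, b p} (path_edges (q1 (b p)))"
      unfolding PB_def path_edges_rev using path_edges_Cons[OF ne] ip(2) by simp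
    moreover have "\<forall>e\<in>path_edges (q1 (b p)). e \<subseteq> V1"
      using path_edges_sub[OF ip(1)] unfolding induced_edges_def by blast
    moreover have "hd (PB p) = v1" "last (PB p) = v2" unfolding PB_def using ip ne by (auto simp: hd_rev last_rev)
    ultimately show ?thesis using ip unfolding path_between_def by simp
  qed
  define K where "K = P - P0"
  define QA where "QA = PA ` P0"
  define QB where "QB = PB ` P0"
  define Q where "Q = K \<union> QA \<union> QB"
  have KK: "path_edges k \<inter> path_edges k' = {}" if "k \<in> K" "k' \<in> K" "k \<noteq> k'" for k k'
    using Pdisj that unfolding K_def by blast
  have PAe: "path_edges (PA p) = insert {v1, a p} (path_edges (q2 (a p)))" "\<forall>e\<in>path_edges (q2 (a p)). e \<subseteq> V2"
    if "p \<in> P0" for p using PAp[OF that] by blast+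
  have PBe: "path_edges (PB p) = insert {v2, b p} (path_edges (q1 (b p)))" "\<forall>e\<in>path_edges (q1 (b p)). e \<subseteq> V1"
    if "p \<in> P0" for p using PBp[OF that] by blast+
  have q2d: "path_edges (q2 (a p)) \<inter> path_edges (q2 (a p')) = {}" if "p \<in> P0" "p' \<in> P0" "a p \<noteq> a p'" for p p'
  proof -
    have "a p \<in> a ` P0" "a p' \<in> a ` P0" using that by blast+
    then show ?thesis using q2 that(3) by blast
  qed
  have q1d: "path_edges (q1 (b p)) \<inter> path_edges (q1 (b p')) = {}" if "p \<in> P0" "p' \<in> P0" "b p \<noteq> b p'" for p p'
  proof -
    have "b p \<in> b ` P0" "b p' \<in> b ` P0" using that by blast+
    then show ?thesis using q1 that(3) by blast
  qed
  have KK: "path_edges k \<inter> path_edges k' = {}" if "k \<in> K" "k' \<in> K" "k \<noteq> k'" for k k'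
    using Pdisj that unfolding K_def by blast
  have AA: "path_edges (PA p) \<inter> path_edges (PA p') = {}" if pin: "p \<in> P0" and pin': "p' \<in> P0" and ne: "PA p \<noteq> PA p'" for p p'
  proof -
    have pp: "p \<noteq> p'" using ne by blast
    have ap: "a p \<noteq> a p'" using ainj pin pin' pp by (meson inj_on_eq_iff)
    have d: "path_edges (q2 (a p)) \<inter> path_edges (q2 (a p')) = {}" using q2d[OF pin pin' ap] .
    have "{v1, a p} \<noteq> {v1, a p'}" using ap by (auto simp: doubleton_eq_iff)
    moreover have "{v1, a p} \<notin> path_edges (q2 (a p'))" "{v1, a p'} \<notin> path_edges (q2 (a p))"
      using PAe(2)[OF pin] PAe(2)[OF pin'] v1 disj by blast+
    ultimately show ?thesis unfolding PAe(1)[OF pin] PAe(1)[OF pin'] using d by blast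
  qed
  have BB: "path_edges (PB p) \<inter> path_edges (PB p') = {}" if pin: "p \<in> P0" and pin': "p' \<in> P0" and ne: "PB p \<noteq> PB p'" for p p'
  proof -
    have pp: "p \<noteq> p'" using ne by blast
    have bp: "b p \<noteq> b p'" using binj pin pin' pp by (meson inj_on_eq_iff)
    have d: "path_edges (q1 (b p)) \<inter> path_edges (q1 (b p')) = {}" using q1d[OF pin pin' bp] .
    have "{v2, b p} \<noteq> {v2, b p'}" using bp by (auto simp: doubleton_eq_iff)
    moreover have "{v2, b p} \<notin> path_edges (q1 (b p'))" "{v2, b p'} \<notin> path_edges (q1 (b p))"
      using PBe(2)[OF pin] PBe(2)[OF pin'] v2 disj by blast+
    ultimately show ?thesis unfolding PBe(1)[OF pin] PBe(1)[OF pin'] using d by blast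
  qed
  have KA: "path_edges k \<inter> path_edges (PA p) = {}" if kin: "k \<in> K" and pin: "p \<in> P0" for k p
  proof -
    have kp: "k \<in> P" "k \<noteq> p" "p \<in> P" using kin pin P0P unfolding K_def by auto
    have "{v1, a p} \<in> path_edges p" using key[OF pin] by blast
    then have "{v1, a p} \<notin> path_edges k" using Pdisj kp by blast
    moreover have "e \<notin> path_edges k" if "e \<in> path_edges (q2 (a p))" for e
    proof
      assume "e \<in> path_edges k"
      then have "\<exists>x y. e = {x, y} \<and> x \<in> V1 \<and> y \<in> V2" using P(4) kp(1) by blast
      moreover have "e \<subseteq> V2" using PAe(2)[OF pin] that by blast
      ultimately show False using cross_not by blast
    qed
    ultimately show ?thesis unfolding PAe(1)[OF pin] by blast
  qed
  have KB: "path_edges k \<inter> path_edges (PB p) = {}" if kin: "k \<in> K" and pin: "p \<in> P0" for k p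
  proof -
    have kp: "k \<in> P" "k \<noteq> p" "p \<in> P" using kin pin P0P unfolding K_def by auto
    have "{b p, v2} \<in> path_edges p" using key[OF pin] by blast
    then have "{b p, v2} \<notin> path_edges k" using Pdisj kp by blast
    then have "{v2, b p} \<notin> path_edges k" by (simp add: insert_commute)
    moreover have "e \<notin> path_edges k" if "e \<in> path_edges (q1 (b p))" for e
    proof
      assume "e \<in> path_edges k"
      then have "\<exists>x y. e = {x, y} \<and> x \<in> V1 \<and> y \<in> V2" using P(4) kp(1) by blast
      moreover have "e \<subseteq> V1" using PBe(2)[OF pin] that by blast
      ultimately show False using cross_not by blast
    qed
    ultimately show ?thesis unfolding PBe(1)[OF pin] by blast
  qed
  have AB: "path_edges (PA p) \<inter> path_edges (PB p') = {}" if pin: "p \<in> P0" and pin': "p' \<in> P0" for p p'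
  proof -
    have k1: "a p \<in> V2" "b p' \<in> V1" "b p' \<noteq> v1" using key[OF pin] key[OF pin'] by blast+
    have "{v1, a p} \<noteq> {v2, b p'}" using k1 v12 by (auto simp: doubleton_eq_iff)
    moreover have "{v1, a p} \<notin> path_edges (q1 (b p'))" using PBe(2)[OF pin'] k1(1) disj by blast
    moreover have "{v2, b p'} \<notin> path_edges (q2 (a p))" using PAe(2)[OF pin] k1(2) disj by blast
    moreover have "e \<notin> path_edges (q1 (b p'))" if "e \<in> path_edges (q2 (a p))" for e
    proof
      assume "e \<in> path_edges (q1 (b p'))"
      then have "e \<subseteq> V1" "e \<subseteq> V2" using PAe(2)[OF pin] PBe(2)[OF pin'] that by blast+
      then have "e = {}" using disj by blast
      then show False using path_edge_nonempty that by blast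
    qed
    ultimately show ?thesis unfolding PAe(1)[OF pin] PBe(1)[OF pin'] by blast
  qed
  have QP: "\<forall>p\<in>Q. path_between E v1 v2 p"
    unfolding Q_def K_def QA_def QB_def using P(3) PAp PBp by blast
  have QD: "\<forall>p\<in>Q. \<forall>q\<in>Q. p \<noteq> q \<longrightarrow> path_edges p \<inter> path_edges q = {}"
  proof (intro ballI impI)
    fix p q assume p: "p \<in> Q" and q: "q \<in> Q" and pq: "p \<noteq> q"
    have sym: "path_edges y \<inter> path_edges x = {}" if "path_edges x \<inter> path_edges y = {}" for x y
      using that by blast
    consider "p \<in> K" | p0 where "p0 \<in> P0" "p = PA p0" | p0 where "p0 \<in> P0" "p = PB p0"
      using p unfolding Q_def QA_def QB_def by blast
    then show "path_edges p \<inter> path_edges q = {}"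
    proof cases
      case 1
      consider "q \<in> K" | q0 where "q0 \<in> P0" "q = PA q0" | q0 where "q0 \<in> P0" "q = PB q0"
        using q unfolding Q_def QA_def QB_def by blast
      then show ?thesis
      proof cases
        case 1 then show ?thesis using KK \<open>p \<in> K\<close> pq by blast
      next
        case 2 then show ?thesis using KA \<open>p \<in> K\<close> by blast
      next
        case 3 then show ?thesis using KB \<open>p \<in> K\<close> by blast
      qed
    next
      case 2
      consider "q \<in> K" | q0 where "q0 \<in> P0" "q = PA q0" | q0 where "q0 \<in> P0" "q = PB q0"
        using q unfolding Q_def QA_def QB_def by blast
      then show ?thesis
      proof cases
        case 1 then show ?thesis using sym[OF KA[OF 1 \<open>p0 \<in> P0\<close>]] 2 by simp
      next
        case 3 then show ?thesis using AB[OF \<open>p0 \<in> P0\<close>] 2 by simp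
      next
        case q2: 2 then show ?thesis using AA[OF \<open>p0 \<in> P0\<close>] 2 pq by simp
      qed
    next
      case 3
      consider "q \<in> K" | q0 where "q0 \<in> P0" "q = PA q0" | q0 where "q0 \<in> P0" "q = PB q0"
        using q unfolding Q_def QA_def QB_def by blast
      then show ?thesis
      proof cases
        case 1 then show ?thesis using sym[OF KB[OF 1 \<open>p0 \<in> P0\<close>]] 3 by simp
      next
        case 2 then show ?thesis using sym[OF AB[OF 2(1) \<open>p0 \<in> P0\<close>]] 3 by simp
      next
        case q3: 3 then show ?thesis using BB[OF \<open>p0 \<in> P0\<close>] 3 pq by simp
      qed
    qed
  qed
  have nonem: "path_edges p \<noteq> {}" if "p \<in> Q" for p
    using QP that path_edges_nonempty unfolding path_between_def by blast
  have finK: "finite K" "finite QA" "finite QB" using P(2) P0(3) unfolding K_def QA_def QB_def by auto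
  have cK: "card K = m - n" unfolding K_def using card_Diff_subset[OF P0(3) P0P] P(1) P0(2) by simp
  have cA: "card QA = n"
  proof -
    have "inj_on PA P0"
    proof (rule inj_onI)
      fix p q assume pq: "p \<in> P0" "q \<in> P0" "PA p = PA q"
      then have "q2 (a p) = q2 (a q)" unfolding PA_def by simp
      moreover have "hd (q2 (a p)) = a p" using PAp[OF pq(1)] by blast
      moreover have "hd (q2 (a q)) = a q" using PAp[OF pq(2)] by blast
      ultimately have "a p = a q" by metis
      then show "p = q" using inj_onD[OF ainj _ pq(1,2)] by blast
    qed
    then show ?thesis unfolding QA_def using P0(2) by (simp add: card_image)
  qed
  have cB: "card QB = n"
  proof -
    have "inj_on PB P0"
    proof (rule inj_onI)
      fix p q assume pq: "p \<in> P0" "q \<in> P0" "PB p = PB q"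
      then have "q1 (b p) = q1 (b q)" unfolding PB_def by simp
      moreover have "hd (q1 (b p)) = b p" using PBp[OF pq(1)] by blast
      moreover have "hd (q1 (b q)) = b q" using PBp[OF pq(2)] by blast
      ultimately have "b p = b q" by metis
      then show "p = q" using inj_onD[OF binj _ pq(1,2)] by blast
    qed
    then show ?thesis unfolding QB_def using P0(2) by (simp add: card_image)
  qed
  have d1: "K \<inter> QA = {}"
  proof (rule ccontr)
    assume "K \<inter> QA \<noteq> {}"
    then obtain k p where kp: "k \<in> K" "p \<in> P0" "k = PA p" unfolding QA_def by blast
    have "path_edges k = {}" using KA[OF kp(1,2)] kp(3) by simp
    moreover have "k \<in> Q" using kp unfolding Q_def by blast
    ultimately show False using nonem by blast
  qed
  have d2: "(K \<union> QA) \<inter> QB = {}"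
  proof (rule ccontr)
    assume "(K \<union> QA) \<inter> QB \<noteq> {}"
    then obtain k p where kp: "k \<in> K \<union> QA" "p \<in> P0" "k = PB p" unfolding QB_def by blast
    have "path_edges k = {}"
    proof (cases "k \<in> K")
      case True then show ?thesis using KB[OF True kp(2)] kp(3) by simp
    next
      case False
      then obtain p' where "p' \<in> P0" "k = PA p'" using kp(1) unfolding QA_def by blast
      then show ?thesis using AB[OF \<open>p' \<in> P0\<close> kp(2)] kp(3) by simp
    qed
    moreover have "k \<in> Q" using kp unfolding Q_def by blast
    ultimately show False using nonem by blast
  qed
  have "card Q = card K + card QA + card QB"
    unfolding Q_def using finK d1 d2 by (simp add: card_Un_disjoint)
  then have "card Q = m + n" using cK cA cB mn by simp
  moreover have "finite Q" unfolding Q_def using finK by blast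
  ultimately show ?thesis using QP QD by blast
qed


end
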